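(* For every even positive integer $n$, letting $\frac{n}{2}\cdot K_2$ denote the perfect matching on $n$ vertices (the disjoint union of $n/2$ edges), $$\chi_{2K_2}\!\left(\tfrac{n}{2}\cdot K_2\right) = \left\lceil \sqrt{n + \tfrac14} + \tfrac12 \right\rceil.$$
   Context: All graphs are finite and simple. For a fixed bipartite graph $H$, a proper vertex coloring of a graph $G$ is called an $H$-avoiding coloring if for any two color classes, the subgraph of $G$ induced by their union contains no induced subgraph isomorphic to $H$. $\chi_H(G)$ denotes the minimum number of colors in an $H$-avoiding coloring of $G$. $2K_2$ is the disjoint union of two edges. *)

theory Defs
  imports Complex_Main
begin

definition simple_graph :: "'a set \<Rightarrow> ('a \<Rightarrow> 'a \<Rightarrow> bool) \<Rightarrow> bool" where
  "simple_graph V E \<longleftrightarrow> finite V \<and> (\<forall>u\<in>V. \<forall>v\<in>V. E u v \<longrightarrow> E v u) \<and> (\<forall>v\<in>V. \<not> E v v)"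

definition has_induced_copy ::
  "'b set \<Rightarrow> ('b \<Rightarrow> 'b \<Rightarrow> bool) \<Rightarrow> 'a set \<Rightarrow> ('a \<Rightarrow> 'a \<Rightarrow> bool) \<Rightarrow> bool" where
  "has_induced_copy VH EH S E \<longleftrightarrow>
     (\<exists>f. inj_on f VH \<and> f ` VH \<subseteq> S \<and> (\<forall>x\<in>VH. \<forall>y\<in>VH. EH x y \<longleftrightarrow> E (f x) (f y)))"

definition proper_coloring :: "'a set \<Rightarrow> ('a \<Rightarrow> 'a \<Rightarrow> bool) \<Rightarrow> ('a \<Rightarrow> nat) \<Rightarrow> bool" where
  "proper_coloring V E c \<longleftrightarrow> (\<forall>u\<in>V. \<forall>v\<in>V. E u v \<longrightarrow> c u \<noteq> c v)"

definition H_avoiding_coloring ::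
  "'b set \<Rightarrow> ('b \<Rightarrow> 'b \<Rightarrow> bool) \<Rightarrow> 'a set \<Rightarrow> ('a \<Rightarrow> 'a \<Rightarrow> bool) \<Rightarrow> nat \<Rightarrow> ('a \<Rightarrow> nat) \<Rightarrow> bool" where
  "H_avoiding_coloring VH EH V E k c \<longleftrightarrow>
     c ` V \<subseteq> {..<k} \<and> proper_coloring V E c \<and>
     (\<forall>i j. i \<noteq> j \<longrightarrow> \<not> has_induced_copy VH EH {v\<in>V. c v = i \<or> c v = j} E)"

definition chi_H ::
  "'b set \<Rightarrow> ('b \<Rightarrow> 'b \<Rightarrow> bool) \<Rightarrow> 'a set \<Rightarrow> ('a \<Rightarrow> 'a \<Rightarrow> bool) \<Rightarrow> nat" where
  "chi_H VH EH V E = (LEAST k. \<exists>c. H_avoiding_coloring VH EH V E k c)"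

definition twoK2_V :: "nat set" where "twoK2_V = {0,1,2,3}"
definition twoK2_E :: "nat \<Rightarrow> nat \<Rightarrow> bool" where
  "twoK2_E x y \<longleftrightarrow> {x,y} = {0,1} \<or> {x,y} = {2,3}"

text \<open>Perfect matching (n/2) K_2 on vertices 0..n-1: edges {2i, 2i+1}.\<close>

definition matching_V :: "nat \<Rightarrow> nat set" where "matching_V n = {..<n}"
definition matching_E :: "nat \<Rightarrow> nat \<Rightarrow> bool" where
  "matching_E x y \<longleftrightarrow> x \<noteq> y \<and> x div 2 = y div 2"

end

theory Submission
  imports Defs
begin

definition S :: "nat \<Rightarrow> (nat \<times> nat) set" where
  "S k = {(a,b). a < b \<and> b < k}"

lemma S_Suc: "S (Suc k) = S k \<union> (\<lambda>a. (a,k)) ` {..<k}"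
  unfolding S_def by (auto simp: less_Suc_eq)

lemma S_finite: "finite (S k)"
  unfolding S_def by (rule finite_subset[of _ "{..<k} \<times> {..<k}"]) auto

lemma S_card: "2 * card (S k) = k * (k - 1)"
proof (induction k)
  case 0 then show ?case by (simp add: S_def)
next
  case (Suc k)
  have d: "S k \<inter> (\<lambda>a. (a,k)) ` {..<k} = {}" unfolding S_def by auto
  have "card (S (Suc k)) = card (S k) + k"
    unfolding S_Suc using d S_finite
    by (subst card_Un_disjoint) (auto simp: card_image inj_on_def)
  then show ?case using Suc by (cases k) (auto simp: algebra_simps)
qed

lemma lower:
  assumes "H_avoiding_coloring twoK2_V twoK2_E {..<2*m} matching_E k c"
  shows "m \<le> card (S k)"
proof -
  have rng: "c ` {..<2*m} \<subseteq> {..<k}" and pr: "proper_coloring {..<2*m} matching_E c"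
    and av: "\<And>i j. i \<noteq> j \<Longrightarrow> \<not> has_induced_copy twoK2_V twoK2_E {v\<in>{..<2*m}. c v = i \<or> c v = j} matching_E"
    using assms unfolding H_avoiding_coloring_def by auto
  define h where "h i = (min (c(2*i)) (c(2*i+1)), max (c(2*i)) (c(2*i+1)))" for i
  have ne: "c (2*i) \<noteq> c (2*i+1)" if "i < m" for i
    using pr that unfolding proper_coloring_def matching_E_def by auto
  have lt: "c (2*i) < k" "c (2*i+1) < k" if "i < m" for i
    using rng that by (auto simp: image_subset_iff)
  have img: "h ` {..<m} \<subseteq> S k"
  proof
    fix p assume "p \<in> h ` {..<m}"
    then obtain i where i: "i < m" "p = h i" by auto
    show "p \<in> S k" using ne[OF i(1)] lt[OF i(1)] unfolding i h_def S_def by (auto simp: min_def max_def)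
  qed
  have inj: "inj_on h {..<m}"
  proof (rule inj_onI, rule ccontr)
    fix i j assume i: "i \<in> {..<m}" and j: "j \<in> {..<m}" and e: "h i = h j" and ij: "i \<noteq> j"
    define a where "a = fst (h i)"
    define b where "b = snd (h i)"
    have ab: "a \<noteq> b" using ne[of i] i unfolding a_def b_def h_def by (auto simp: min_def max_def)
    have ci: "c (2*i) = a \<or> c (2*i) = b" "c (2*i+1) = a \<or> c (2*i+1) = b"
      unfolding a_def b_def h_def by (auto simp: min_def max_def)
    have cj: "c (2*j) = a \<or> c (2*j) = b" "c (2*j+1) = a \<or> c (2*j+1) = b"
      unfolding a_def b_def e unfolding h_def by (auto simp: min_def max_def)
    define f where "f x = (if x = (0::nat) then 2*i else if x = 1 then 2*i+1 else if x = 2 then 2*j else 2*j+1)" for x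
    have "has_induced_copy twoK2_V twoK2_E {v\<in>{..<2*m}. c v = a \<or> c v = b} matching_E"
      unfolding has_induced_copy_def
    proof (intro exI[of _ f] conjI)
      show "inj_on f twoK2_V" using ij unfolding inj_on_def f_def twoK2_V_def by auto
      show "f ` twoK2_V \<subseteq> {v\<in>{..<2*m}. c v = a \<or> c v = b}"
        using i j ci cj unfolding f_def twoK2_V_def by auto
      show "\<forall>x\<in>twoK2_V. \<forall>y\<in>twoK2_V. twoK2_E x y = matching_E (f x) (f y)"
        using ij unfolding twoK2_V_def twoK2_E_def matching_E_def f_def
        by (auto simp: doubleton_eq_iff)
    qed
    with av[OF ab] show False by blast
  qed
  from card_inj_on_le[OF inj img S_finite] show ?thesis by simp
qed

lemma upper:
  assumes "m \<le> card (S k)"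
  shows "\<exists>c. H_avoiding_coloring twoK2_V twoK2_E {..<2*m} matching_E k c"
proof -
  obtain g where g: "g ` {..<m} \<subseteq> S k" "inj_on g {..<m}"
    using card_le_inj[of "{..<m}" "S k"] assms S_finite by auto
  define c where "c v = (if even v then fst (g (v div 2)) else snd (g (v div 2)))" for v
  have gS: "fst (g e) < snd (g e)" "snd (g e) < k" if "e < m" for e
    using g(1) that unfolding S_def by auto
  have col: "{c (2*e), c (2*e+1)} = {fst (g e), snd (g e)}" for e
    unfolding c_def by auto
  show ?thesis unfolding H_avoiding_coloring_def
  proof (intro exI[of _ c] conjI allI impI)
    show "c ` {..<2*m} \<subseteq> {..<k}"
    proof
      fix x assume "x \<in> c ` {..<2*m}"
      then obtain v where v: "v < 2*m" "x = c v" by auto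
      then have "v div 2 < m" by auto
      with gS[of "v div 2"] show "x \<in> {..<k}" unfolding v c_def by auto
    qed
    show "proper_coloring {..<2*m} matching_E c"
      unfolding proper_coloring_def matching_E_def
    proof (intro ballI impI)
      fix u v assume u: "u \<in> {..<2*m}" and v: "v \<in> {..<2*m}" and e: "u \<noteq> v \<and> u div 2 = v div 2"
      then have "even u \<noteq> even v" by (metis div_mult_mod_eq mod2_eq_if)
      moreover have "u div 2 < m" using u by auto
      ultimately show "c u \<noteq> c v" using gS[of "u div 2"] e unfolding c_def by auto
    qed
  next
    fix i j :: nat assume ij: "i \<noteq> j"
    show "\<not> has_induced_copy twoK2_V twoK2_E {v\<in>{..<2*m}. c v = i \<or> c v = j} matching_E"
    proof
      assume "has_induced_copy twoK2_V twoK2_E {v\<in>{..<2*m}. c v = i \<or> c v = j} matching_E"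
      then obtain f where inj: "inj_on f twoK2_V" and sub: "f ` twoK2_V \<subseteq> {v\<in>{..<2*m}. c v = i \<or> c v = j}"
        and ed: "\<forall>x\<in>twoK2_V. \<forall>y\<in>twoK2_V. twoK2_E x y = matching_E (f x) (f y)"
        unfolding has_induced_copy_def by blast
      have E01: "matching_E (f 0) (f 1)" and E23: "matching_E (f 2) (f 3)" and N02: "\<not> matching_E (f 0) (f 2)"
        using ed unfolding twoK2_V_def twoK2_E_def by (auto simp: doubleton_eq_iff)
      have n02: "f 0 \<noteq> f 2" using inj unfolding inj_on_def twoK2_V_def by auto
      have s: "f x < 2*m \<and> (c (f x) = i \<or> c (f x) = j)" if "x \<in> {0,1,2,3}" for x
        using sub that unfolding twoK2_V_def by auto
      have key: "g (f x div 2) = (min i j, max i j) \<and> f x div 2 < m"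
        if "matching_E (f x) (f y)" "x \<in> {0,1,2,3}" "y \<in> {0,1,2,3}" for x y
      proof -
        let ?e = "f x div 2"
        have fy: "f y div 2 = ?e" "f x \<noteq> f y" using that(1) unfolding matching_E_def by auto
        have em: "?e < m" using s[OF that(2)] by auto
        have "even (f x) \<noteq> even (f y)" using fy by (metis div_mult_mod_eq mod2_eq_if)
        then have cc: "{c (f x), c (f y)} = {fst (g ?e), snd (g ?e)}"
          unfolding c_def using fy by auto
        have lt: "fst (g ?e) < snd (g ?e)" using gS[OF em] by auto
        have "{fst (g ?e), snd (g ?e)} \<subseteq> {i, j}" using cc s[OF that(2)] s[OF that(3)] by auto
        with lt ij have "fst (g ?e) = min i j \<and> snd (g ?e) = max i j" by (auto simp: min_def max_def)
        then show ?thesis using em by (metis prod.collapse)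
      qed
      have k1: "g (f 0 div 2) = (min i j, max i j)" "f 0 div 2 < m" using key[OF E01] by auto
      have k2: "g (f 2 div 2) = (min i j, max i j)" "f 2 div 2 < m" using key[OF E23] by auto
      have "f 0 div 2 = f 2 div 2" using g(2) k1 k2 unfolding inj_on_def by auto
      with N02 n02 show False unfolding matching_E_def by auto
    qed
  qed
qed

lemma real_iff:
  fixes n k :: nat
  assumes "n > 0"
  shows "n \<le> k * (k - 1) \<longleftrightarrow> sqrt (real n + 1/4) + 1/2 \<le> real k"
proof (cases k)
  case 0
  have "sqrt (real n + 1/4) \<ge> 0" by simp
  then show ?thesis using assms 0 by linarith
next
  case (Suc l)
  have "sqrt (real n + 1/4) + 1/2 \<le> real k \<longleftrightarrow> sqrt (real n + 1/4) \<le> real k - 1/2" by auto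
  also have "\<dots> \<longleftrightarrow> real n + 1/4 \<le> (real k - 1/2)^2"
  proof -
    have "real k - 1/2 \<ge> 0" using Suc by simp
    then show ?thesis using real_le_lsqrt[of "real k - 1/2" "real n + 1/4"] sqrt_le_D[of "real n + 1/4" "real k - 1/2"] by blast
  qed
  also have "\<dots> \<longleftrightarrow> real n \<le> real k * (real k - 1)" by (simp add: power2_eq_square algebra_simps)
  also have "\<dots> \<longleftrightarrow> n \<le> k * (k - 1)" proof -
    have "real k * (real k - 1) = real (k * (k - 1))" using Suc by (simp add: of_nat_diff algebra_simps)
    then show ?thesis by (simp only: of_nat_le_iff)
  qed
  finally show ?thesis by simp
qed

theorem corollary3:
  fixes n :: nat
  assumes "even n" and "n > 0"
  shows "int (chi_H twoK2_V twoK2_E (matching_V n) matching_E)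
           = \<lceil>sqrt (real n + 1/4) + 1/2\<rceil>"
proof -
  define m where "m = n div 2"
  have n: "n = 2*m" using assms(1) unfolding m_def by auto
  define x where "x = sqrt (real n + 1/4) + 1/2"
  define K where "K = nat \<lceil>x\<rceil>"
  have xpos: "x > 0" unfolding x_def by (simp add: add_nonneg_pos)
  have KK: "int K = \<lceil>x\<rceil>" unfolding K_def using xpos by simp
  have iff: "(\<exists>c. H_avoiding_coloring twoK2_V twoK2_E (matching_V n) matching_E k c) \<longleftrightarrow> K \<le> k" for k
  proof -
    have "(\<exists>c. H_avoiding_coloring twoK2_V twoK2_E (matching_V n) matching_E k c) \<longleftrightarrow> n \<le> k*(k-1)"
      using lower[of m k] upper[of m k] S_card[of k] unfolding matching_V_def n by fastforce
    also have "\<dots> \<longleftrightarrow> x \<le> real k" using real_iff[OF assms(2)] unfolding x_def by simp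
    also have "\<dots> \<longleftrightarrow> \<lceil>x\<rceil> \<le> int k" by (simp add: ceiling_le_iff)
    also have "\<dots> \<longleftrightarrow> K \<le> k" using KK by linarith
    finally show ?thesis .
  qed
  have "chi_H twoK2_V twoK2_E (matching_V n) matching_E = K"
    unfolding chi_H_def iff by (rule Least_equality) auto
  then show ?thesis using KK unfolding x_def by simp
qed

end
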